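(* Let $(X,\xi)$ be a probability space, and let $f\in L^1(X,\xi)$ be non-negative. Then there is an increasing $1$-Lipschitz function $\psi:[0,\infty)\to[0,\infty)$ with $\lim_{y\to\infty}\psi(y)=\infty$ such that, setting $\Psi(y)=\int_0^y\psi(z)\,dz$ for $y\ge0$, one has $\Psi(f)\in L^1(X,\xi)$. Moreover, the function $F:[0,\infty)\to[0,\infty)$, $F(y)=\Psi(\log(1+y))$, is increasing and differentiable on $[0,\infty)$, and there exists $M>0$ such that \[ F(y+y')\le F(y)+F(y')+M\quad\text{for all }y,y'\ge0. \] *)

theory Defs
  imports "HOL-Probability.Probability"
begin

definition Prim :: "(real \<Rightarrow> real) \<Rightarrow> real \<Rightarrow> real" where
  "Prim \<psi> y = integral {0..y} \<psi>"

end

theory Submission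
  imports Defs
begin


definition psiN :: "(nat \<Rightarrow> nat) \<Rightarrow> real \<Rightarrow> real" where
  "psiN n y = (INF k. real k + max 0 (y - real (n k)))"

lemma psiN_bdd: "bdd_below (range (\<lambda>k. real k + max 0 (y - real (n k))))"
  by (rule bdd_belowI[where m=0]) auto

lemma psiN_le: "psiN n y \<le> real k + max 0 (y - real (n k))"
  unfolding psiN_def by (rule cINF_lower[OF psiN_bdd]) simp

lemma psiN_ge: "(\<And>k. c \<le> real k + max 0 (y - real (n k))) \<Longrightarrow> c \<le> psiN n y"
  unfolding psiN_def by (rule cINF_greatest) auto

lemma psiN_nonneg: "0 \<le> psiN n y"
  by (rule psiN_ge) auto

lemma psiN_zero: "psiN n 0 = 0"
  using psiN_le[of n 0 0] psiN_nonneg[of n 0] by simp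

lemma psiN_mono: "y \<le> z \<Longrightarrow> psiN n y \<le> psiN n z"
proof (rule psiN_ge)
  fix k assume "y \<le> z"
  have "psiN n y \<le> real k + max 0 (y - real (n k))" by (rule psiN_le)
  also have "\<dots> \<le> real k + max 0 (z - real (n k))" using \<open>y \<le> z\<close> by simp
  finally show "psiN n y \<le> real k + max 0 (z - real (n k))" .
qed

lemma psiN_lip1: "psiN n y \<le> psiN n z + \<bar>y - z\<bar>"
proof -
  have "psiN n y - \<bar>y - z\<bar> \<le> psiN n z"
  proof (rule psiN_ge)
    fix k
    have "psiN n y \<le> real k + max 0 (y - real (n k))" by (rule psiN_le)
    also have "\<dots> \<le> real k + max 0 (z - real (n k)) + \<bar>y - z\<bar>" by simp
    finally show "psiN n y - \<bar>y - z\<bar> \<le> real k + max 0 (z - real (n k))" by simp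
  qed
  then show ?thesis by simp
qed

lemma psiN_lip: "\<bar>psiN n y - psiN n z\<bar> \<le> \<bar>y - z\<bar>"
  using psiN_lip1[of n y z] psiN_lip1[of n z y] by (simp add: abs_le_iff abs_minus_commute)

lemma psiN_cont: "continuous_on S (psiN n)"
  unfolding continuous_on_iff dist_real_def
  by (metis le_less_trans psiN_lip)



lemma psiN_top:
  assumes "mono n"
  shows "filterlim (psiN n) at_top at_top"
  unfolding filterlim_at_top
proof
  fix Z :: real
  define K where "K = nat \<lceil>Z\<rceil>"
  have "psiN n y \<ge> Z" if "y \<ge> real (n K) + K" for y
  proof -
    have "real K \<le> psiN n y"
    proof (rule psiN_ge)
      fix k
      show "real K \<le> real k + max 0 (y - real (n k))"
      proof (cases "K \<le> k")
        case True then show ?thesis by simp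
      next
        case False
        then have "n k \<le> n K" using assms by (simp add: monoD)
        then show ?thesis using that by linarith
      qed
    qed
    moreover have "Z \<le> real K" unfolding K_def by linarith
    ultimately show ?thesis by linarith
  qed
  then show "eventually (\<lambda>y. Z \<le> psiN n y) at_top"
    unfolding eventually_at_top_linorder by blast
qed



context
  fixes p :: "real \<Rightarrow> real"
  assumes pc: "continuous_on UNIV p" and pm: "mono p" and pn: "\<And>y. 0 \<le> p y"
begin

lemma p_int: "p integrable_on {a..b}"
  by (rule integrable_continuous_real) (rule continuous_on_subset[OF pc], simp)

lemma Prim_neg: "y < 0 \<Longrightarrow> Prim p y = 0"
  unfolding Prim_def by simp

lemma Prim_nonneg: "0 \<le> Prim p y"
  unfolding Prim_def by (rule integral_nonneg[OF p_int]) (simp add: pn)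

lemma Prim_diff: "0 \<le> a \<Longrightarrow> a \<le> b \<Longrightarrow> Prim p b - Prim p a = integral {a..b} p"
  unfolding Prim_def using Henstock_Kurzweil_Integration.integral_combine[where f=p and a=0 and c=a and b=b, OF _ _ p_int] by simp

lemma int_bounds:
  assumes "a \<le> b" "\<And>z. z \<in> {a..b} \<Longrightarrow> lo \<le> p z \<and> p z \<le> hi"
  shows "(b - a) * lo \<le> integral {a..b} p \<and> integral {a..b} p \<le> (b - a) * hi"
proof
  have "integral {a..b} (\<lambda>_. lo) \<le> integral {a..b} p"
    by (rule integral_le[OF integrable_const_ivl p_int]) (use assms in auto)
  then show "(b - a) * lo \<le> integral {a..b} p" using assms by simp
  have "integral {a..b} p \<le> integral {a..b} (\<lambda>_. hi)"
    by (rule integral_le[OF p_int integrable_const_ivl]) (use assms in auto)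
  then show "integral {a..b} p \<le> (b - a) * hi" using assms by simp
qed

lemma Prim_mono: "mono (Prim p)"
proof (rule monoI)
  fix s t :: real assume "s \<le> t"
  show "Prim p s \<le> Prim p t"
  proof (cases "s < 0")
    case True then show ?thesis using Prim_neg Prim_nonneg by simp
  next
    case False
    have "0 \<le> integral {s..t} p"
      by (rule integral_nonneg[OF p_int]) (simp add: pn)
    then show ?thesis using Prim_diff[of s t] False \<open>s \<le> t\<close> by simp
  qed
qed

lemma Prim_le: "0 \<le> t \<Longrightarrow> Prim p t \<le> t * p t"
  using int_bounds[of 0 t 0 "p t"] pm unfolding Prim_def by (auto simp: pn monoD)

lemma Prim_deriv:
  assumes "0 \<le> t"
  shows "(Prim p has_field_derivative p t) (at t within {0..})"
proof -
  have "(Prim p has_field_derivative p t) (at t within {0..t+1})"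
    unfolding Prim_def[abs_def]
    by (rule integral_has_real_derivative) (use assms in \<open>auto intro: continuous_on_subset[OF pc]\<close>)
  moreover have "at t within {0..t+1} = at t within {0..}"
    by (rule at_within_nhd[where S="{t-1<..<t+1}"]) auto
  ultimately show ?thesis by simp
qed

end


context
  fixes p :: "real \<Rightarrow> real"
  assumes pc: "continuous_on UNIV p" and pm: "mono p" and pn: "\<And>y. 0 \<le> p y"
    and pl: "\<And>a b. \<bar>p a - p b\<bar> \<le> \<bar>a - b\<bar>" and p0: "p 0 = 0"
begin

lemma p_le_Prim: "0 \<le> v \<Longrightarrow> p v \<le> Prim p v + 1"
proof (cases "v \<ge> 1")
  case True
  have "1 * (p v - 1) \<le> integral {v-1..v} p"
  proof -
    have "(v - (v - 1)) * (p v - 1) \<le> integral {v-1..v} p"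
    proof (rule conjunct1[OF int_bounds[OF pc pm pn]])
      fix z assume z: "z \<in> {v-1..v}"
      have "p v - p z \<le> 1" using pl[of v z] z by (auto simp: abs_le_iff)
      moreover have "p z \<le> p v" using z pm by (auto simp: monoD)
      ultimately show "p v - 1 \<le> p z \<and> p z \<le> p v" by simp
    qed simp
    then show ?thesis by simp
  qed
  moreover have "Prim p v - Prim p (v-1) = integral {v-1..v} p"
    using Prim_diff[OF pc pm pn, of "v-1" v] True by simp
  moreover have "0 \<le> Prim p (v-1)" by (rule Prim_nonneg[OF pc pm pn])
  ultimately show ?thesis by simp
next
  case False
  assume "0 \<le> v"
  have "p v \<le> 1" using pl[of v 0] p0 False \<open>0 \<le> v\<close> by simp
  then show ?thesis using Prim_nonneg[OF pc pm pn, of v] by simp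
qed

lemma subadd_aux:
  fixes y y' :: real
  assumes y': "0 \<le> y'" and yy: "y' \<le> y"
  shows "Prim p (ln (1 + (y + y'))) \<le> Prim p (ln (1 + y)) + Prim p (ln (1 + y')) + 3"
proof -
  define u where "u = ln (1 + y)"
  define v where "v = ln (1 + y')"
  define L where "L = ln (1 + (y + y'))"
  define r where "r = y' / (1 + y)"
  have y: "0 \<le> y" using y' yy by simp
  have v0: "0 \<le> v" unfolding v_def using y' by simp
  have vu: "v \<le> u" unfolding v_def u_def using y' yy by simp
  have uL: "u \<le> L" unfolding u_def L_def using y' y by simp
  have r0: "0 \<le> r" "r \<le> 1" unfolding r_def using y y' yy by auto
  have "L - u = ln ((1 + (y + y')) / (1 + y))"
    unfolding L_def u_def using y y' by (simp add: ln_div)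
  also have "\<dots> \<le> (1 + (y + y')) / (1 + y) - 1"
    by (rule ln_le_minus_one) (use y y' in simp)
  also have "\<dots> = r" unfolding r_def using y by (simp add: field_simps)
  finally have Lu: "L - u \<le> r" .
  have "u - v = ln ((1 + y) / (1 + y'))"
    unfolding v_def u_def using y y' by (simp add: ln_div)
  also have "\<dots> \<le> (1 + y) / (1 + y') - 1"
    by (rule ln_le_minus_one) (use y y' in simp)
  also have "\<dots> = (y - y') / (1 + y')" using y' by (simp add: field_simps)
  finally have uv: "u - v \<le> (y - y') / (1 + y')" .
  have ruv: "r * (u - v) \<le> 1"
  proof -
    have "r * (u - v) \<le> r * ((y - y') / (1 + y'))"
      by (rule mult_left_mono[OF uv r0(1)])
    also have "\<dots> = (y' * (y - y')) / ((1 + y) * (1 + y'))"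
      unfolding r_def by simp
    also have "\<dots> \<le> 1"
    proof -
      have "y' * (y - y') \<le> (1 + y) * (1 + y')"
        using y y' yy by (simp add: algebra_simps)
      then show ?thesis using y y' by (simp add: divide_le_eq_1)
    qed
    finally show ?thesis .
  qed
  have "Prim p L - Prim p u = integral {u..L} p"
    using Prim_diff[OF pc pm pn, of u L] uL vu v0 by simp
  also have "\<dots> \<le> (L - u) * p L"
  proof (rule conjunct2[OF int_bounds[OF pc pm pn, of u L 0 "p L"]])
    show "u \<le> L" by (rule uL)
    fix z assume "z \<in> {u..L}"
    then show "0 \<le> p z \<and> p z \<le> p L" using pn pm by (auto simp: monoD)
  qed
  also have "\<dots> \<le> r * p L" by (rule mult_right_mono[OF Lu pn])
  also have "\<dots> \<le> r * (p v + (u - v) + 1)"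
  proof (rule mult_left_mono[OF _ r0(1)])
    have "p L \<le> p u + (L - u)" using pl[of L u] uL by (simp add: abs_le_iff)
    moreover have "p u \<le> p v + (u - v)" using pl[of u v] vu by (simp add: abs_le_iff)
    ultimately show "p L \<le> p v + (u - v) + 1" using Lu r0 by simp
  qed
  also have "\<dots> = r * p v + r * (u - v) + r" by (simp add: algebra_simps)
  also have "\<dots> \<le> p v + 1 + 1"
  proof -
    have "r * p v \<le> 1 * p v" by (rule mult_right_mono[OF r0(2) pn])
    then show ?thesis using ruv r0 by simp
  qed
  also have "\<dots> \<le> Prim p v + 3" using p_le_Prim[OF v0] by simp
  finally show ?thesis unfolding L_def u_def v_def by simp
qed

end


lemma pointwise_bound:
  fixes n :: "nat \<Rightarrow> nat" and t :: real
  assumes nj: "\<And>j. j \<le> n j" and t: "0 \<le> t"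
  shows "ennreal (t * psiN n t) \<le> (\<Sum>j. ennreal (if real (n j) < t then t else 0))"
proof -
  define k where "k = (LEAST k. t \<le> real (n k))"
  have ex: "t \<le> real (n (nat \<lceil>t\<rceil>))"
  proof -
    have "t \<le> real (nat \<lceil>t\<rceil>)" by linarith
    also have "\<dots> \<le> real (n (nat \<lceil>t\<rceil>))" using nj[of "nat \<lceil>t\<rceil>"] by simp
    finally show ?thesis .
  qed
  have tk: "t \<le> real (n k)" unfolding k_def by (rule LeastI[where P="\<lambda>k. t \<le> real (n k)", OF ex])
  have lt: "real (n j) < t" if "j < k" for j
    using not_less_Least[OF that[unfolded k_def]] by simp
  have "psiN n t \<le> real k + max 0 (t - real (n k))" by (rule psiN_le)
  then have pk: "psiN n t \<le> real k" using tk by simp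
  have "t * psiN n t \<le> t * real k" by (rule mult_left_mono[OF pk t])
  also have "\<dots> = (\<Sum>j<k. (if real (n j) < t then t else 0))" using lt by simp
  finally have "ennreal (t * psiN n t) \<le> ennreal (\<Sum>j<k. (if real (n j) < t then t else 0))"
    by (rule ennreal_leI)
  also have "\<dots> = (\<Sum>j<k. ennreal (if real (n j) < t then t else 0))"
    by (rule sum_ennreal[symmetric]) (use t in auto)
  also have "\<dots> \<le> (\<Sum>j. ennreal (if real (n j) < t then t else 0))"
    by (rule sum_le_suminf) (auto intro: summableI)
  finally show ?thesis .
qed



theorem theorem3p5:
  fixes M :: "'a measure" and f :: "'a \<Rightarrow> real"
  assumes "prob_space M"
    and "integrable M f"
    and "AE x in M. 0 \<le> f x"
  shows "\<exists>\<psi> :: real \<Rightarrow> real.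
     (\<forall>y\<ge>0. 0 \<le> \<psi> y)
   \<and> mono_on {0..} \<psi>
   \<and> (\<forall>y\<ge>0. \<forall>z\<ge>0. \<bar>\<psi> y - \<psi> z\<bar> \<le> \<bar>y - z\<bar>)
   \<and> filterlim \<psi> at_top at_top
   \<and> integrable M (\<lambda>x. Prim \<psi> (f x))
   \<and> (\<forall>y\<ge>0. 0 \<le> Prim \<psi> (ln (1 + y)))
   \<and> mono_on {0..} (\<lambda>y. Prim \<psi> (ln (1 + y)))
   \<and> (\<forall>y\<ge>0. (\<lambda>y. Prim \<psi> (ln (1 + y))) differentiable (at y within {0..}))
   \<and> (\<exists>C>0. \<forall>y\<ge>0. \<forall>y'\<ge>0.
        Prim \<psi> (ln (1 + (y + y'))) \<le> Prim \<psi> (ln (1 + y)) + Prim \<psi> (ln (1 + y')) + C)"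
proof -
  define g where "g x = \<bar>f x\<bar>" for x
  have gi: "integrable M g" unfolding g_def using assms(2) by (rule integrable_abs)
  have gm: "g \<in> borel_measurable M" using gi by (rule borel_measurable_integrable)
  define s where "s m x = (if real m < g x then g x else 0)" for m :: nat and x
  have sm: "s m \<in> borel_measurable M" for m unfolding s_def using gm by measurable
  have si: "integrable M (s m)" for m
    by (rule Bochner_Integration.integrable_bound[OF gi sm]) (auto simp: s_def g_def)
  define a where "a m = integral\<^sup>L M (s m)" for m
  have "(\<lambda>m. integral\<^sup>L M (s m)) \<longlonglongrightarrow> integral\<^sup>L M (\<lambda>x. 0)"
  proof (rule integral_dominated_convergence[where w=g])
    show "AE x in M. (\<lambda>m. s m x) \<longlonglongrightarrow> 0"
    proof (rule AE_I2)
      fix x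
      have "eventually (\<lambda>m. s m x = 0) sequentially"
        unfolding eventually_sequentially s_def
        by (rule exI[where x="nat \<lceil>g x\<rceil>"]) (auto simp: nat_ceiling_le_eq)
      then show "(\<lambda>m. s m x) \<longlonglongrightarrow> 0" by (rule tendsto_eventually)
    qed
    show "AE x in M. norm (s m x) \<le> g x" for m by (auto simp: s_def g_def)
  qed (use gi sm in auto)
  then have a0: "a \<longlonglongrightarrow> 0" unfolding a_def by simp
  have "\<exists>N. \<forall>m\<ge>N. a m < (1/2)^j" for j :: nat
  proof -
    have "eventually (\<lambda>m. a m < (1/2)^j) sequentially"
      by (rule order_tendstoD(2)[OF a0]) simp
    then show ?thesis unfolding eventually_sequentially .
  qed
  then obtain N where N: "\<And>j m. N j \<le> m \<Longrightarrow> a m < (1/2)^j" by metis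
  define n where "n = rec_nat (N 0) (\<lambda>j r. max (Suc r) (N (Suc j)))"
  have n0: "n 0 = N 0" and nS: "n (Suc j) = max (Suc (n j)) (N (Suc j))" for j
    unfolding n_def by simp_all
  have nmono: "mono n" by (rule incseq_SucI) (simp add: nS)
  have nN: "N j \<le> n j" for j by (cases j) (simp_all add: n0 nS)
  have nj: "j \<le> n j" for j by (induction j) (simp_all add: n0 nS)
  define p where "p = psiN n"
  have pc: "continuous_on UNIV p" unfolding p_def by (rule psiN_cont)
  have pm: "mono p" unfolding p_def by (rule monoI, rule psiN_mono)
  have pn: "\<And>y. 0 \<le> p y" unfolding p_def by (rule psiN_nonneg)
  have pl: "\<And>a b. \<bar>p a - p b\<bar> \<le> \<bar>a - b\<bar>" unfolding p_def by (rule psiN_lip)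
  have p0: "p 0 = 0" unfolding p_def by (rule psiN_zero)
  define h where "h x = g x * p (g x)" for x
  have hm: "h \<in> borel_measurable M"
    unfolding h_def using gm borel_measurable_mono[OF pm] by measurable
  have hi: "integrable M h"
  proof (rule integrableI_nonneg[OF hm])
    show "AE x in M. 0 \<le> h x" by (auto simp: h_def g_def pn)
    have "(\<integral>\<^sup>+x. ennreal (h x) \<partial>M) \<le> (\<integral>\<^sup>+x. (\<Sum>j. ennreal (s (n j) x)) \<partial>M)"
      by (rule nn_integral_mono) (unfold h_def s_def p_def, rule pointwise_bound[OF nj], simp add: g_def)
    also have "\<dots> = (\<Sum>j. \<integral>\<^sup>+x. ennreal (s (n j) x) \<partial>M)"
      by (rule nn_integral_suminf) (use sm in measurable)
    also have "\<dots> = (\<Sum>j. ennreal (a (n j)))"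
      unfolding a_def by (subst nn_integral_eq_integral[OF si]) (auto simp: s_def g_def)
    also have "\<dots> \<le> (\<Sum>j. ennreal ((1/2)^j))"
      by (intro suminf_le ennreal_leI less_imp_le[OF N] nN summableI)
    also have "\<dots> = ennreal (\<Sum>j. (1/2)^j)"
      by (rule suminf_ennreal2) auto
    also have "\<dots> < \<infinity>" by simp
    finally show "(\<integral>\<^sup>+x. ennreal (h x) \<partial>M) < \<infinity>" .
  qed
  have Pi: "integrable M (\<lambda>x. Prim p (f x))"
  proof (rule Bochner_Integration.integrable_bound[OF hi])
    show "(\<lambda>x. Prim p (f x)) \<in> borel_measurable M"
      using borel_measurable_mono[OF Prim_mono[OF pc pm pn]] borel_measurable_integrable[OF assms(2)]
      by measurable
    show "AE x in M. norm (Prim p (f x)) \<le> norm (h x)"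
    proof (rule AE_I2)
      fix x
      have "Prim p (f x) \<le> h x"
      proof (cases "f x < 0")
        case True
        have "0 \<le> h x" unfolding h_def g_def by (rule mult_nonneg_nonneg[OF abs_ge_zero pn])
        then show ?thesis using Prim_neg[OF pc pm pn True] by simp
      next
        case False then show ?thesis using Prim_le[OF pc pm pn, of "f x"] by (simp add: h_def g_def)
      qed
      then show "norm (Prim p (f x)) \<le> norm (h x)" using Prim_nonneg[OF pc pm pn] by simp
    qed
  qed
  have diff: "(\<lambda>y. Prim p (ln (1 + y))) differentiable (at y within {0..})" if y: "0 \<le> y" for y :: real
  proof -
    have d1: "((\<lambda>y. ln (1 + y)) has_field_derivative 1 / (1 + y)) (at y within {0..})"
      using y by (auto intro!: derivative_eq_intros)
    have "(Prim p has_field_derivative p (ln (1 + y))) (at (ln (1 + y)) within {0..})"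
      by (rule Prim_deriv[OF pc pm pn]) (use y in simp)
    then have d2: "(Prim p has_field_derivative p (ln (1 + y))) (at (ln (1 + y)) within (\<lambda>y. ln (1 + y)) ` {0..})"
      by (rule DERIV_subset) auto
    have "(Prim p \<circ> (\<lambda>y. ln (1 + y)) has_field_derivative p (ln (1 + y)) * (1 / (1 + y))) (at y within {0..})"
      by (rule DERIV_image_chain[OF d2 d1])
    then show ?thesis unfolding o_def
      by (meson differentiableI has_field_derivative_imp_has_derivative)
  qed
  have sub: "Prim p (ln (1 + (y + y'))) \<le> Prim p (ln (1 + y)) + Prim p (ln (1 + y')) + 3"
    if "0 \<le> y" "0 \<le> y'" for y y' :: real
  proof (cases "y' \<le> y")
    case True then show ?thesis using subadd_aux[OF pc pm pn pl p0 that(2) True] by simp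
  next
    case False
    then show ?thesis using subadd_aux[OF pc pm pn pl p0 that(1), of y'] by (simp add: add.commute)
  qed
  show ?thesis
  proof (rule exI[where x=p], intro conjI)
    show "\<forall>y\<ge>0. 0 \<le> p y" using pn by simp
    show "mono_on {0..} p" using pm by (simp add: mono_on_def monoD)
    show "\<forall>y\<ge>0. \<forall>z\<ge>0. \<bar>p y - p z\<bar> \<le> \<bar>y - z\<bar>" using pl by simp
    show "filterlim p at_top at_top" unfolding p_def by (rule psiN_top[OF nmono])
    show "integrable M (\<lambda>x. Prim p (f x))" by (rule Pi)
    show "\<forall>y\<ge>0. 0 \<le> Prim p (ln (1 + y))" using Prim_nonneg[OF pc pm pn] by simp
    show "mono_on {0..} (\<lambda>y. Prim p (ln (1 + y)))"
      by (rule mono_onI, rule monoD[OF Prim_mono[OF pc pm pn]]) simp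
    show "\<forall>y\<ge>0. (\<lambda>y. Prim p (ln (1 + y))) differentiable (at y within {0..})" using diff by simp
    show "\<exists>C>0. \<forall>y\<ge>0. \<forall>y'\<ge>0.
        Prim p (ln (1 + (y + y'))) \<le> Prim p (ln (1 + y)) + Prim p (ln (1 + y')) + C"
      by (rule exI[where x=3]) (simp add: sub)
  qed
qed

end
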